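(* Let $K\ge1$, $n\ge1$. Let $y_1,\dots,y_n$ be data and let $p^p_1,\dots,p^p_K$ be the predictive densities obtained by fitting $K$ models to these data; let $\tilde y_1,\dots,\tilde y_n$ be i.i.d. new draws from the data-generating distribution $Q$, with $y\sim Q$ a generic draw and $\mathrm{E}$ the expectation under $Q$ (with the fitted densities held fixed). Define the optimism $op_k=-\sum_i\log p^p_k(\tilde y_i)+\sum_i\log p^p_k(y_i)$, the weights $w^{op}_k=e^{-op_k}/\sum_j e^{-op_j}$, the overfitting ratios $m_k=\frac{\sum_i-\log p^p_k(\tilde y_i)}{\sum_i-\log p^p_k(y_i)}$ and $m=\min_k m_k$, and $$\phi_{term}=\log\frac1K\sum_k\mathrm{E}\Big[e^{\sum_i\log p^p_k(\tilde y_i)-n\mathrm{E}[\log p^p_k(y)]}\Big].$$ Assume $\sum_i-\log p^p_k(y_i)>0$ for each $k$ and $m>1$. Then for any $\delta\in(0,1]$, with probability at least $1-\delta$, simultaneously for all $w^p\in S^K$: $$n\,\mathrm{E}\Big[-\log\sum_kw^p_kp^p_k(y)\Big]\le\frac{m}{m-1}\sum_kw^p_k\log\frac{w^p_k}{w^{op}_k}-\frac{1}{m-1}\sum_kw^p_k\log w^p_k+\log K-\frac{m}{m-1}\log\sum_ke^{-op_k}-\log\delta+\phi_{term}.$$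
   Context: $S^K$ is the set of probability vectors with $K$ components; $0\log 0=0$. *)

theory Defs
  imports "HOL-Probability.Probability"
begin

definition prob_simplex :: "nat \<Rightarrow> (nat \<Rightarrow> real) set" where
  "prob_simplex K = {w. (\<forall>k<K. 0 \<le> w k) \<and> (\<Sum>k<K. w k) = 1}"

definition optimism :: "nat \<Rightarrow> (nat \<Rightarrow> 'a \<Rightarrow> real) \<Rightarrow> (nat \<Rightarrow> 'a) \<Rightarrow> (nat \<Rightarrow> 'a) \<Rightarrow> nat \<Rightarrow> real" where
  "optimism n p y yt k = - (\<Sum>i<n. ln (p k (yt i))) + (\<Sum>i<n. ln (p k (y i)))"

definition w_op :: "nat \<Rightarrow> nat \<Rightarrow> (nat \<Rightarrow> 'a \<Rightarrow> real) \<Rightarrow> (nat \<Rightarrow> 'a) \<Rightarrow> (nat \<Rightarrow> 'a) \<Rightarrow> nat \<Rightarrow> real" where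
  "w_op K n p y yt k = exp (- optimism n p y yt k) / (\<Sum>j<K. exp (- optimism n p y yt j))"

definition overfit_ratio :: "nat \<Rightarrow> (nat \<Rightarrow> 'a \<Rightarrow> real) \<Rightarrow> (nat \<Rightarrow> 'a) \<Rightarrow> (nat \<Rightarrow> 'a) \<Rightarrow> nat \<Rightarrow> real" where
  "overfit_ratio n p y yt k = (\<Sum>i<n. - ln (p k (yt i))) / (\<Sum>i<n. - ln (p k (y i)))"

definition overfit_min :: "nat \<Rightarrow> nat \<Rightarrow> (nat \<Rightarrow> 'a \<Rightarrow> real) \<Rightarrow> (nat \<Rightarrow> 'a) \<Rightarrow> (nat \<Rightarrow> 'a) \<Rightarrow> real" where
  "overfit_min K n p y yt = Min ((\<lambda>k. overfit_ratio n p y yt k) ` {..<K})"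

definition phi_integrand :: "'a measure \<Rightarrow> nat \<Rightarrow> (nat \<Rightarrow> 'a \<Rightarrow> real) \<Rightarrow> nat \<Rightarrow> (nat \<Rightarrow> 'a) \<Rightarrow> real" where
  "phi_integrand Q n p k yt =
     exp ((\<Sum>i<n. ln (p k (yt i))) - real n * (\<integral>x. ln (p k x) \<partial>Q))"

definition phi_term :: "'a measure \<Rightarrow> nat \<Rightarrow> nat \<Rightarrow> (nat \<Rightarrow> 'a \<Rightarrow> real) \<Rightarrow> real" where
  "phi_term Q K n p =
     ln ((1 / real K) * (\<Sum>k<K. \<integral>yt. phi_integrand Q n p k yt \<partial>(PiM {..<n} (\<lambda>_. Q))))"

end

theory Submission
  imports Defs
begin

lemma wjensen:
  fixes w c :: "nat \<Rightarrow> real" and I :: "nat set"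
  assumes fin: "finite I" and w0: "\<And>k. k \<in> I \<Longrightarrow> 0 \<le> w k" and w1: "(\<Sum>k\<in>I. w k) = 1"
    and cp: "\<And>k. k \<in> I \<Longrightarrow> 0 < c k"
  shows "(\<Sum>k\<in>I. w k * ln (c k)) \<le> ln (\<Sum>k\<in>I. w k * c k)"
proof -
  define C where "C = (\<Sum>k\<in>I. w k * c k)"
  obtain i where i: "i \<in> I" "w i > 0"
  proof (rule ccontr)
    assume "\<not> thesis"
    with that have "\<forall>k\<in>I. w k = 0" using w0 by force
    then show False using w1 by simp
  qed
  have Cp: "C > 0" unfolding C_def
    by (rule sum_pos2[OF fin i(1)]) (use i cp w0 in \<open>auto intro: mult_nonneg_nonneg less_imp_le\<close>)
  have trm: "w k * (ln (c k) - ln C) \<le> w k * c k / C - w k" if k: "k \<in> I" for k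
  proof -
    have "ln (c k) - ln C = ln (c k / C)" using cp[OF k] Cp by (simp add: ln_div)
    also have "\<dots> \<le> c k / C - 1" using cp[OF k] Cp by (intro ln_le_minus_one) simp
    finally have "w k * (ln (c k) - ln C) \<le> w k * (c k / C - 1)"
      using w0[OF k] by (rule mult_left_mono)
    then show ?thesis by (simp add: algebra_simps)
  qed
  have "(\<Sum>k\<in>I. w k * (ln (c k) - ln C)) \<le> (\<Sum>k\<in>I. w k * c k / C - w k)"
    using trm by (rule sum_mono)
  also have "\<dots> = C / C - 1" by (simp add: sum_subtractf sum_divide_distrib[symmetric] C_def w1)
  also have "\<dots> = 0" using Cp by simp
  finally have "(\<Sum>k\<in>I. w k * ln (c k)) - (\<Sum>k\<in>I. w k) * ln C \<le> 0"
    by (simp add: right_diff_distrib sum_subtractf sum_distrib_right)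
  then show ?thesis using w1 by (simp add: C_def)
qed

lemma gibbs:
  fixes w b :: "nat \<Rightarrow> real" and I :: "nat set"
  assumes fin: "finite I" and w0: "\<And>k. k \<in> I \<Longrightarrow> 0 \<le> w k" and w1: "(\<Sum>k\<in>I. w k) = 1"
    and bp: "\<And>k. k \<in> I \<Longrightarrow> 0 < b k"
  shows "(\<Sum>k\<in>I. w k * (ln (b k) - ln (w k))) \<le> ln (\<Sum>k\<in>I. b k)"
proof -
  define B where "B = (\<Sum>k\<in>I. b k)"
  have ne: "I \<noteq> {}" using w1 by auto
  have Bp: "B > 0" unfolding B_def using fin ne bp by (intro sum_pos) auto
  have trm: "w k * (ln (b k) - ln (w k) - ln B) \<le> b k / B - w k" if k: "k \<in> I" for k
  proof (cases "w k = 0")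
    case True then show ?thesis using bp[OF k] Bp by simp
  next
    case False
    then have wp: "w k > 0" using w0[OF k] by simp
    have "ln (b k) - ln (w k) - ln B = ln (b k / (w k * B))"
      using bp[OF k] Bp wp by (simp add: ln_div ln_mult)
    also have "\<dots> \<le> b k / (w k * B) - 1" using bp[OF k] Bp wp by (intro ln_le_minus_one) simp
    finally have "w k * (ln (b k) - ln (w k) - ln B) \<le> w k * (b k / (w k * B) - 1)"
      using w0[OF k] by (rule mult_left_mono)
    also have "\<dots> = b k / B - w k" using wp Bp by (simp add: field_simps)
    finally show ?thesis .
  qed
  have "(\<Sum>k\<in>I. w k * (ln (b k) - ln (w k) - ln B)) \<le> (\<Sum>k\<in>I. b k / B - w k)"
    using trm by (rule sum_mono)
  also have "\<dots> = B / B - 1" by (simp add: sum_subtractf sum_divide_distrib[symmetric] B_def w1)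
  also have "\<dots> = 0" using Bp by simp
  finally have "(\<Sum>k\<in>I. w k * (ln (b k) - ln (w k))) - (\<Sum>k\<in>I. w k) * ln B \<le> 0"
    by (simp only: right_diff_distrib[of _ "ln (b k) - ln (w k)" "ln B" for k] sum_subtractf sum_distrib_right)
  then show ?thesis using w1 by (simp add: B_def)
qed

lemma lhs_bound:
  fixes Q :: "'a measure" and K n :: nat and p :: "nat \<Rightarrow> 'a \<Rightarrow> real" and w :: "nat \<Rightarrow> real"
  assumes "prob_space Q"
    and meas: "\<forall>k<K. p k \<in> borel_measurable Q"
    and pos: "\<forall>k<K. \<forall>x. 0 < p k x"
    and int: "\<forall>k<K. integrable Q (\<lambda>x. ln (p k x))"
    and w: "w \<in> prob_simplex K"
  shows "real n * (\<integral>x. - ln (\<Sum>k<K. w k * p k x) \<partial>Q)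
         \<le> (\<Sum>k<K. w k * (- (real n * (\<integral>x. ln (p k x) \<partial>Q))))"
proof -
  have w0: "\<And>k. k \<in> {..<K} \<Longrightarrow> 0 \<le> w k" and w1: "(\<Sum>k<K. w k) = 1"
    using w by (auto simp: prob_simplex_def)
  have wle1: "w k \<le> 1" if "k < K" for k
  proof -
    have "w k \<le> (\<Sum>k<K. w k)" using that w0 by (intro member_le_sum) auto
    then show ?thesis using w1 by simp
  qed
  define f where "f x = (\<Sum>k<K. \<bar>ln (p k x)\<bar>)" for x
  define g where "g x = - ln (\<Sum>k<K. w k * p k x)" for x
  have jen: "(\<Sum>k<K. w k * ln (p k x)) \<le> ln (\<Sum>k<K. w k * p k x)" for x
    using pos w0 w1 by (intro wjensen) auto
  have intf: "integrable Q f" unfolding f_def using int by (auto intro!: Bochner_Integration.integrable_sum)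
  have measg: "g \<in> borel_measurable Q" unfolding g_def
    using meas by (intro borel_measurable_uminus borel_measurable_ln borel_measurable_sum
        borel_measurable_times borel_measurable_const) auto
  have bnd: "norm (g x) \<le> norm (f x)" for x
  proof -
    have f0: "0 \<le> f x" unfolding f_def by (intro sum_nonneg) auto
    have lo: "- f x \<le> (\<Sum>k<K. w k * ln (p k x))"
      unfolding f_def sum_negf[symmetric]
    proof (intro sum_mono)
      fix k assume k: "k \<in> {..<K}"
      have "w k * \<bar>ln (p k x)\<bar> \<le> \<bar>ln (p k x)\<bar>"
        using wle1[of k] w0[of k] k by (intro mult_left_le_one_le) auto
      then have "- \<bar>ln (p k x)\<bar> \<le> w k * (- \<bar>ln (p k x)\<bar>)" by simp
      also have "\<dots> \<le> w k * ln (p k x)" using w0[OF k] by (intro mult_left_mono) auto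
      finally show "- \<bar>ln (p k x)\<bar> \<le> w k * ln (p k x)" .
    qed
    have "(\<Sum>k<K. w k * p k x) \<le> (\<Sum>k<K. w k * exp (f x))"
    proof (intro sum_mono mult_left_mono)
      fix k assume k: "k \<in> {..<K}"
      have "\<bar>ln (p k x)\<bar> \<le> f x" unfolding f_def
        using k by (intro member_le_sum) auto
      then have "ln (p k x) \<le> f x" by linarith
      then have "exp (ln (p k x)) \<le> exp (f x)" by simp
      moreover have "exp (ln (p k x)) = p k x" using pos k by simp
      ultimately show "p k x \<le> exp (f x)" by simp
      show "0 \<le> w k" using w0 k by simp
    qed
    also have "\<dots> = exp (f x)" using w1 by (simp add: sum_distrib_right[symmetric])
    finally have up0: "(\<Sum>k<K. w k * p k x) \<le> exp (f x)" .
    obtain i where i: "i < K" "w i > 0"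
    proof (rule ccontr)
      assume "\<not> thesis"
      with that have "\<forall>k<K. w k = 0" using w0 by force
      then show False using w1 by simp
    qed
    have nn: "\<forall>k\<in>{..<K}. 0 \<le> w k * p k x"
      using pos w0 by (simp add: less_imp_le)
    have pi: "0 < w i * p i x" using i pos by simp
    have sp: "0 < (\<Sum>k<K. w k * p k x)"
      using sum_pos2[of "{..<K}" i "\<lambda>k. w k * p k x"] nn pi i by auto
    have "ln (\<Sum>k<K. w k * p k x) \<le> f x"
      using up0 sp by (metis ln_exp ln_le_cancel_iff exp_gt_zero)
    then show ?thesis using lo jen[of x] f0 unfolding g_def by auto
  qed
  have intg: "integrable Q g" by (rule Bochner_Integration.integrable_bound[OF intf measg]) (use bnd in auto)
  have "(\<integral>x. g x \<partial>Q) \<le> (\<integral>x. (\<Sum>k<K. w k * (- ln (p k x))) \<partial>Q)"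
  proof (rule integral_mono[OF intg])
    show "integrable Q (\<lambda>x. \<Sum>k<K. w k * - ln (p k x))" using int by auto
    show "g x \<le> (\<Sum>k<K. w k * - ln (p k x))" for x
      using jen[of x] unfolding g_def by (simp add: sum_negf)
  qed
  also have "\<dots> = (\<Sum>k<K. w k * (- (\<integral>x. ln (p k x) \<partial>Q)))"
    using int by (subst Bochner_Integration.integral_sum) auto
  finally have "(\<integral>x. g x \<partial>Q) \<le> (\<Sum>k<K. w k * (- (\<integral>x. ln (p k x) \<partial>Q)))" .
  then have "real n * (\<integral>x. g x \<partial>Q) \<le> real n * (\<Sum>k<K. w k * (- (\<integral>x. ln (p k x) \<partial>Q)))"
    by (intro mult_left_mono) auto
  then show ?thesis unfolding g_def by (simp add: sum_distrib_left algebra_simps)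
qed

theorem theorem3p4:
  fixes Q :: "'a measure" and K n :: nat
    and p :: "nat \<Rightarrow> 'a \<Rightarrow> real" and y :: "nat \<Rightarrow> 'a" and \<delta> :: real
  assumes "prob_space Q"
    and "K \<ge> 1" and "n \<ge> 1"
    and "\<forall>k<K. p k \<in> borel_measurable Q"
    and "\<forall>k<K. \<forall>x. 0 < p k x"
    and "\<forall>k<K. integrable Q (\<lambda>x. ln (p k x))"
    and "\<forall>k<K. integrable (PiM {..<n} (\<lambda>_. Q)) (phi_integrand Q n p k)"
    and "\<forall>k<K. (\<Sum>i<n. - ln (p k (y i))) > 0"
    and "0 < \<delta>" and "\<delta> \<le> 1"
  shows "\<exists>A \<in> sets (PiM {..<n} (\<lambda>_. Q)).
           measure (PiM {..<n} (\<lambda>_. Q)) A \<ge> 1 - \<delta> \<and>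
           (\<forall>yt \<in> A. overfit_min K n p y yt > 1 \<longrightarrow>
              (\<forall>w \<in> prob_simplex K.
                 real n * (\<integral>x. - ln (\<Sum>k<K. w k * p k x) \<partial>Q)
                 \<le> overfit_min K n p y yt / (overfit_min K n p y yt - 1)
                      * (\<Sum>k<K. w k * ln (w k / w_op K n p y yt k))
                   - 1 / (overfit_min K n p y yt - 1) * (\<Sum>k<K. w k * ln (w k))
                   + ln (real K)
                   - overfit_min K n p y yt / (overfit_min K n p y yt - 1)
                      * ln (\<Sum>k<K. exp (- optimism n p y yt k))
                   - ln \<delta>
                   + phi_term Q K n p))"
proof -
  note assms(1)[simp]
  define M where "M = PiM {..<n} (\<lambda>_. Q)"
  interpret M: prob_space M unfolding M_def by (intro prob_space_PiM) (use assms(1) in auto)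
  define phi where "phi k yt = phi_integrand Q n p k yt" for k yt
  define Z where "Z yt = 1 / real K * (\<Sum>k<K. phi k yt)" for yt
  define EZ where "EZ = 1 / real K * (\<Sum>k<K. \<integral>yt. phi k yt \<partial>M)"
  have phiint: "\<And>k. k < K \<Longrightarrow> integrable M (phi k)" using assms(7) unfolding M_def phi_def by auto
  have phipos: "0 < phi k yt" for k yt unfolding phi_def phi_integrand_def by simp
  have Zpos: "0 < Z yt" for yt
    unfolding Z_def using assms(2) phipos by (intro mult_pos_pos sum_pos) (auto simp: lessThan_empty_iff)
  have Zint: "integrable M Z" unfolding Z_def using phiint by (intro integrable_mult_right Bochner_Integration.integrable_sum) auto
  have EZ_eq: "(\<integral>yt. Z yt \<partial>M) = EZ"
    unfolding Z_def EZ_def using phiint by (simp add: Bochner_Integration.integral_sum)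
  have EZpos: "EZ > 0"
  proof -
    have ge: "EZ \<ge> 0" unfolding EZ_eq[symmetric] using Zpos by (intro integral_nonneg_AE) (auto intro: less_imp_le)
    have "EZ \<noteq> 0"
    proof
      assume "EZ = 0"
      then have "AE x in M. Z x = 0"
        using integral_nonneg_eq_0_iff_AE[OF Zint] Zpos EZ_eq by (auto intro: less_imp_le)
      then have "AE x in M. False" by (rule eventually_mono) (metis Zpos less_irrefl)
      then show False by simp
    qed
    then show ?thesis using ge by simp
  qed
  define c where "c = EZ / \<delta>"
  have cpos: "c > 0" unfolding c_def using EZpos assms(9) by simp
  define A where "A = {x \<in> space M. Z x \<le> c}"
  have Zmeas: "Z \<in> borel_measurable M" using Zint by auto
  have Asets: "A \<in> sets M" unfolding A_def using Zmeas by measurable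
  have mk: "measure M {x \<in> space M. c \<le> Z x} \<le> EZ / c"
    using integral_Markov_inequality_measure[OF Zint Asets _ cpos] Zpos EZ_eq by (auto intro: less_imp_le)
  have "space M - A \<subseteq> {x \<in> space M. c \<le> Z x}" unfolding A_def by auto
  then have "measure M (space M - A) \<le> measure M {x \<in> space M. c \<le> Z x}"
    using Zmeas by (intro M.finite_measure_mono) auto
  also have "\<dots> \<le> \<delta>" using mk EZpos assms(9) unfolding c_def by simp
  finally have measA: "measure M A \<ge> 1 - \<delta>" using M.prob_compl[OF Asets] by simp
  show ?thesis unfolding M_def[symmetric]
  proof (intro bexI[OF _ Asets] conjI ballI impI)
    show "1 - \<delta> \<le> measure M A" by (rule measA)
    fix yt w assume ytA: "yt \<in> A" and m1: "overfit_min K n p y yt > 1" and w: "w \<in> prob_simplex K"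
    define m where "m = overfit_min K n p y yt"
    define T where "T k = (\<Sum>i<n. - ln (p k (yt i)))" for k
    define L where "L k = (\<Sum>i<n. - ln (p k (y i)))" for k
    define R where "R k = - (real n * (\<integral>x. ln (p k x) \<partial>Q))" for k
    define S where "S = (\<Sum>k<K. exp (- optimism n p y yt k))"
    have w0: "\<And>k. k \<in> {..<K} \<Longrightarrow> 0 \<le> w k" and w1: "(\<Sum>k<K. w k) = 1"
      using w by (auto simp: prob_simplex_def)
    have opT: "optimism n p y yt k = T k - L k" for k
      unfolding optimism_def T_def L_def by (simp add: sum_negf)
    have phiRT: "phi k yt = exp (R k - T k)" for k
      unfolding phi_def phi_integrand_def R_def T_def by (simp add: sum_negf)
    have Lpos: "k < K \<Longrightarrow> L k > 0" for k using assms(8) unfolding L_def by auto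
    have mle: "m \<le> T k / L k" if "k < K" for k
      unfolding m_def overfit_min_def T_def L_def
      using that by (intro Min_le) (auto simp: overfit_ratio_def)
    have m1': "m > 1" using m1 m_def by simp
    have Spos: "S > 0" unfolding S_def using assms(2) by (intro sum_pos) (auto simp: lessThan_empty_iff)
    have s1: "real n * (\<integral>x. - ln (\<Sum>k<K. w k * p k x) \<partial>Q) \<le> (\<Sum>k<K. w k * R k)"
      unfolding R_def using lhs_bound[OF assms(1) assms(4) assms(5) assms(6) w] .
    have s2: "(\<Sum>k<K. w k * ((R k - T k) - ln (w k))) \<le> ln (\<Sum>k<K. exp (R k - T k))"
      using gibbs[of "{..<K}" w "\<lambda>k. exp (R k - T k)"] w0 w1 by simp
    have ZA: "Z yt \<le> c" using ytA unfolding A_def by simp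
    have sumZ: "(\<Sum>k<K. exp (R k - T k)) = real K * Z yt"
      unfolding Z_def phiRT using assms(2) by simp
    have s3: "ln (\<Sum>k<K. exp (R k - T k)) \<le> ln (real K) + phi_term Q K n p - ln \<delta>"
    proof -
      have "ln (\<Sum>k<K. exp (R k - T k)) = ln (real K) + ln (Z yt)"
        using sumZ Zpos[of yt] assms(2) by (simp add: ln_mult)
      also have "ln (Z yt) \<le> ln c" using Zpos[of yt] ZA by simp
      also have "ln c = ln EZ - ln \<delta>" unfolding c_def using EZpos assms(9) by (simp add: ln_div)
      also have "ln EZ = phi_term Q K n p" unfolding phi_term_def EZ_def M_def phi_def by simp
      finally show ?thesis by simp
    qed
    have s4: "(\<Sum>k<K. w k * T k) \<le> m / (m - 1) * (\<Sum>k<K. w k * optimism n p y yt k)"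
      unfolding sum_distrib_left
    proof (intro sum_mono)
      fix k assume k: "k \<in> {..<K}"
      have "m * L k \<le> T k" using mle[of k] Lpos[of k] k by (simp add: le_divide_eq)
      then have "T k \<le> m / (m - 1) * (T k - L k)" using m1' by (simp add: field_simps)
      then have "w k * T k \<le> w k * (m / (m - 1) * (T k - L k))" using w0[OF k] by (rule mult_left_mono)
      then show "w k * T k \<le> m / (m - 1) * (w k * optimism n p y yt k)" by (simp only: opT mult.assoc mult.left_commute)
    qed
    have s5: "(\<Sum>k<K. w k * ln (w k / w_op K n p y yt k))
        = (\<Sum>k<K. w k * ln (w k)) + (\<Sum>k<K. w k * optimism n p y yt k) + ln S"
    proof -
      have "(\<Sum>k<K. w k * ln (w k / w_op K n p y yt k))
          = (\<Sum>k<K. w k * ln (w k) + w k * optimism n p y yt k + w k * ln S)"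
      proof (intro sum.cong refl)
        fix k assume k: "k \<in> {..<K}"
        show "w k * ln (w k / w_op K n p y yt k) = w k * ln (w k) + w k * optimism n p y yt k + w k * ln S"
        proof (cases "w k = 0")
          case True then show ?thesis by simp
        next
          case False
          then have wp: "w k > 0" using w0[OF k] by simp
          have "ln (w k / w_op K n p y yt k) = ln (w k) - ln (w_op K n p y yt k)"
            using wp Spos by (intro ln_divide_pos) (auto simp: w_op_def S_def[symmetric])
          also have "ln (w_op K n p y yt k) = - optimism n p y yt k - ln S"
            using Spos by (simp add: w_op_def S_def[symmetric] ln_div)
          finally show ?thesis by (simp add: algebra_simps)
        qed
      qed
      also have "\<dots> = (\<Sum>k<K. w k * ln (w k)) + (\<Sum>k<K. w k * optimism n p y yt k) + ln S"
        using w1 by (simp add: sum.distrib sum_distrib_right[symmetric])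
      finally show ?thesis .
    qed
    have s2': "(\<Sum>k<K. w k * R k) \<le> (\<Sum>k<K. w k * T k) + (\<Sum>k<K. w k * ln (w k)) + ln (\<Sum>k<K. exp (R k - T k))"
      using s2 by (simp add: right_diff_distrib sum_subtractf)
    have m11: "m / (m - 1) - 1 / (m - 1) = 1" using m1' by (simp add: diff_divide_distrib[symmetric])
    have "real n * (\<integral>x. - ln (\<Sum>k<K. w k * p k x) \<partial>Q)
        \<le> m / (m - 1) * (\<Sum>k<K. w k * optimism n p y yt k) + (\<Sum>k<K. w k * ln (w k))
           + ln (real K) + phi_term Q K n p - ln \<delta>"
      using s1 s2' s3 s4 by linarith
    also have "\<dots> = m / (m - 1) * (\<Sum>k<K. w k * ln (w k / w_op K n p y yt k))
                   - 1 / (m - 1) * (\<Sum>k<K. w k * ln (w k))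
                   + ln (real K)
                   - m / (m - 1) * ln S
                   - ln \<delta>
                   + phi_term Q K n p"
    proof -
      have "m / (m - 1) * (\<Sum>k<K. w k * ln (w k)) - 1 / (m - 1) * (\<Sum>k<K. w k * ln (w k))
            = (\<Sum>k<K. w k * ln (w k))"
        using m11 by (metis left_diff_distrib mult_1)
      then show ?thesis unfolding s5 by (simp add: algebra_simps)
    qed
    finally show "real n * (\<integral>x. - ln (\<Sum>k<K. w k * p k x) \<partial>Q)
                 \<le> overfit_min K n p y yt / (overfit_min K n p y yt - 1)
                      * (\<Sum>k<K. w k * ln (w k / w_op K n p y yt k))
                   - 1 / (overfit_min K n p y yt - 1) * (\<Sum>k<K. w k * ln (w k))
                   + ln (real K)
                   - overfit_min K n p y yt / (overfit_min K n p y yt - 1)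
                      * ln (\<Sum>k<K. exp (- optimism n p y yt k))
                   - ln \<delta>
                   + phi_term Q K n p"
      unfolding m_def S_def .
  qed
qed

end
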